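(* Fix $x\in\mathbb{R}^d$ and let $L=\lceil 640\,d\ln k\rceil$. Then for every step $t$ with $D_t>0$, $$\Pr\big\{D_{t+L}\ge D_t/2\mid\mathcal{T}_t\big\}\le\frac1{k^3}.$$
   Context: Centers $C=\{c^1,\dots,c^k\}\subset\mathbb{R}^d$, $\delta\in(0,1)$, $\varepsilon=\min\{\delta/(15\ln k),1/320\}$. A median of a finite nonempty $S\subset\mathbb{R}^d$ is a point $m$ such that for every coordinate $i$ each of $\{c\in S:c_i<m_i\}$, $\{c\in S:c_i>m_i\}$ has at most $|S|/2$ elements. Algorithm: $\mathcal{T}_1$ is a root (cell $\mathbb{R}^d$) with assigned centers $C$. For $t=1,2,\dots$, while some leaf has at least two assigned centers: sample independently $i_t$ uniform in $\{1,\dots,d\}$, $\theta_t$ uniform in $(0,1)$, $\sigma_t$ uniform in $\{\pm1\}$; to every leaf $u$ of $\mathcal{T}_t$ with $|C_u|\ge2$ apply Divide-and-Share with $(i,\theta,\sigma)=(i_t,\theta_t,\sigma_t)$, giving $\mathcal{T}_{t+1}$. Divide-and-Share on node $u$: $m^u$ a median of $C_u$, $R_u=\max_{c\in C_u}\|c-m^u\|_2$, $Left=\{c\in C_u:c_i\le m^u_i+(\sigma+\varepsilon)\sqrt\theta R_u\}$, $Right=\{c\in C_u:c_i\ge m^u_i+(\sigma-\varepsilon)\sqrt\theta R_u\}$; if both nonempty, $u$ is split into children $\{y\in u: y_i\le m^u_i+\sigma\sqrt\theta R_u\}$ with centers $Left$ and $\{y\in u: y_i> m^u_i+\sigma\sqrt\theta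 R_u\}$ with centers $Right$; otherwise $u$ is unchanged. For the fixed $x$, $u_t$ is the leaf of $\mathcal{T}_t$ containing $x$, $C_t=C_{u_t}$, $D_t=\max\{\|a-b\|_2:a,b\in C_t\}$. If the algorithm has stopped before step $s$, $\mathcal{T}_s$ denotes the final tree. *)

theory Defs
  imports "HOL-Probability.Probability"
begin

text \<open>Points of R^d are vectors of type real^'d (d = CARD('d)).
  A leaf of the tree is a pair (cell, assigned centers); a tree is represented by
  the set of its leaves (the internal nodes play no role in the statement).\<close>

type_synonym 'd leaf = "(real^'d) set \<times> (real^'d) set"
type_synonym 'd choice = "'d \<times> real \<times> real"

definition is_median :: "(real^'d) set \<Rightarrow> real^'d \<Rightarrow> bool" where
  "is_median S m \<longleftrightarrow>
     (\<forall>i. real (card {c\<in>S. c$i < m$i}) \<le> real (card S) / 2 \<and>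
          real (card {c\<in>S. c$i > m$i}) \<le> real (card S) / 2)"

definition eps_param :: "real \<Rightarrow> nat \<Rightarrow> real" where
  "eps_param \<delta> k = min (\<delta> / (15 * ln (real k))) (1/320)"

definition divide_and_share ::
  "((real^'d) set \<Rightarrow> real^'d) \<Rightarrow> real \<Rightarrow> 'd choice \<Rightarrow> 'd leaf \<Rightarrow> 'd leaf set" where
  "divide_and_share med \<epsilon> ch u =
    (let (i, \<theta>, \<sigma>) = ch; (U, S) = u; m = med S;
         R = Max ((\<lambda>c. norm (c - m)) ` S);
         Left = {c\<in>S. c$i \<le> m$i + (\<sigma> + \<epsilon>) * sqrt \<theta> * R};
         Right = {c\<in>S. c$i \<ge> m$i + (\<sigma> - \<epsilon>) * sqrt \<theta> * R};
         a = m$i + \<sigma> * sqrt \<theta> * R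
     in if Left \<noteq> {} \<and> Right \<noteq> {}
        then {({y\<in>U. y$i \<le> a}, Left), ({y\<in>U. y$i > a}, Right)}
        else {u})"

definition tree_step ::
  "((real^'d) set \<Rightarrow> real^'d) \<Rightarrow> real \<Rightarrow> 'd leaf set \<Rightarrow> 'd choice \<Rightarrow> 'd leaf set" where
  "tree_step med \<epsilon> T ch =
    (if \<exists>u\<in>T. card (snd u) \<ge> 2
     then (\<Union>u\<in>T. if card (snd u) \<ge> 2 then divide_and_share med \<epsilon> ch u else {u})
     else T)"

text \<open>run med eps T0 w n: the tree after n iterations started from T0, using
  the choices w 0, ..., w (n-1).  With T0 the root, run ... n is T_(n+1).\<close>
primrec run ::
  "((real^'d) set \<Rightarrow> real^'d) \<Rightarrow> real \<Rightarrow> 'd leaf set \<Rightarrow> (nat \<Rightarrow> 'd choice) \<Rightarrow> nat \<Rightarrow> 'd leaf set" where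
  "run med \<epsilon> T0 w 0 = T0"
| "run med \<epsilon> T0 w (Suc n) = tree_step med \<epsilon> (run med \<epsilon> T0 w n) (w n)"

definition root_tree :: "(real^'d) set \<Rightarrow> 'd leaf set" where
  "root_tree C = {(UNIV, C)}"

definition leaf_centers :: "real^'d \<Rightarrow> 'd leaf set \<Rightarrow> (real^'d) set" where
  "leaf_centers x T = snd (THE u. u \<in> T \<and> x \<in> fst u)"

definition Dleaf :: "real^'d \<Rightarrow> 'd leaf set \<Rightarrow> real" where
  "Dleaf x T = diameter (leaf_centers x T)"

definition choice_measure :: "'d::finite choice measure" where
  "choice_measure = uniform_count_measure (UNIV :: 'd set) \<Otimes>\<^sub>M
     (uniform_measure lborel {0<..<1} \<Otimes>\<^sub>M uniform_count_measure {-1, 1})"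

definition valid_choice :: "'d choice \<Rightarrow> bool" where
  "valid_choice ch \<longleftrightarrow> fst (snd ch) \<in> {0<..<1} \<and> snd (snd ch) \<in> {-1, 1}"

end

theory Submission
  imports Defs
begin

definition RS :: "((real^'d) set \<Rightarrow> real^'d) \<Rightarrow> (real^'d) set \<Rightarrow> real" where
  "RS med S = Max ((\<lambda>c. norm (c - med S)) ` S)"

definition lft :: "((real^'d) set \<Rightarrow> real^'d) \<Rightarrow> real \<Rightarrow> (real^'d) set \<Rightarrow> 'd choice \<Rightarrow> (real^'d) set" where
  "lft med \<epsilon> S ch = {c\<in>S. c$(fst ch) \<le> med S $ fst ch + (snd (snd ch) + \<epsilon>) * sqrt (fst (snd ch)) * RS med S}"

definition rgt :: "((real^'d) set \<Rightarrow> real^'d) \<Rightarrow> real \<Rightarrow> (real^'d) set \<Rightarrow> 'd choice \<Rightarrow> (real^'d) set" where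
  "rgt med \<epsilon> S ch = {c\<in>S. c$(fst ch) \<ge> med S $ fst ch + (snd (snd ch) - \<epsilon>) * sqrt (fst (snd ch)) * RS med S}"

definition thr :: "((real^'d) set \<Rightarrow> real^'d) \<Rightarrow> (real^'d) set \<Rightarrow> 'd choice \<Rightarrow> real" where
  "thr med S ch = med S $ fst ch + snd (snd ch) * sqrt (fst (snd ch)) * RS med S"

definition xstep :: "((real^'d) set \<Rightarrow> real^'d) \<Rightarrow> real \<Rightarrow> real^'d \<Rightarrow> (real^'d) set \<Rightarrow> 'd choice \<Rightarrow> (real^'d) set" where
  "xstep med \<epsilon> x S ch =
    (if card S \<ge> 2 then
      (if lft med \<epsilon> S ch \<noteq> {} \<and> rgt med \<epsilon> S ch \<noteq> {}
       then (if x $ fst ch \<le> thr med S ch then lft med \<epsilon> S ch else rgt med \<epsilon> S ch)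
       else S)
     else S)"

primrec xrun where
  "xrun med \<epsilon> x S w 0 = S"
| "xrun med \<epsilon> x S w (Suc n) = xstep med \<epsilon> x (xrun med \<epsilon> x S w n) (w n)"

definition tinv :: "(real^'d) set \<Rightarrow> 'd leaf set \<Rightarrow> bool" where
  "tinv C T \<longleftrightarrow> (\<forall>y. \<exists>!u. u \<in> T \<and> y \<in> fst u) \<and> (\<forall>u\<in>T. snd u \<subseteq> C)"

lemma leaf_centers_eq:
  assumes "tinv C T" "w \<in> T" "x \<in> fst w"
  shows "leaf_centers x T = snd w"
proof -
  have "(THE u. u \<in> T \<and> x \<in> fst u) = w"
    using assms unfolding tinv_def by (intro the_equality) auto
  thus ?thesis by (simp add: leaf_centers_def)
qed

lemma tinv_leaf:
  assumes "tinv C T"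
  obtains w where "w \<in> T" "x \<in> fst w" "leaf_centers x T = snd w"
  using assms leaf_centers_eq unfolding tinv_def by metis

lemma ds_cases:
  "divide_and_share med \<epsilon> ch (U, S) = {(U, S)} \<or>
   (\<exists>a i L R. divide_and_share med \<epsilon> ch (U, S) = {({y\<in>U. y$i \<le> a}, L), ({y\<in>U. y$i > a}, R)} \<and> L \<subseteq> S \<and> R \<subseteq> S)"
  unfolding divide_and_share_def
  by (cases ch) (auto simp: Let_def)

lemma ds_sub:
  assumes "w \<in> divide_and_share med \<epsilon> ch u"
  shows "fst w \<subseteq> fst u \<and> snd w \<subseteq> snd u"
proof -
  obtain U S where u: "u = (U, S)" by (cases u)
  from ds_cases[of med \<epsilon> ch U S] show ?thesis
  proof (elim disjE exE conjE)
    assume "divide_and_share med \<epsilon> ch (U, S) = {(U, S)}"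
    with assms u have "w = (U, S)" by simp
    thus ?thesis using u by simp
  next
    fix a i L R
    assume "divide_and_share med \<epsilon> ch (U, S) = {({y\<in>U. y$i \<le> a}, L), ({y\<in>U. y$i > a}, R)}" "L \<subseteq> S" "R \<subseteq> S"
    with assms u have "w = ({y\<in>U. y$i \<le> a}, L) \<or> w = ({y\<in>U. y$i > a}, R)" by simp
    thus ?thesis using u \<open>L \<subseteq> S\<close> \<open>R \<subseteq> S\<close> by (elim disjE) auto
  qed
qed

lemma ds_part:
  assumes "y \<in> fst u"
  shows "\<exists>!w. w \<in> divide_and_share med \<epsilon> ch u \<and> y \<in> fst w"
proof -
  obtain U S where u: "u = (U, S)" by (cases u)
  have yU: "y \<in> U" using assms u by simp
  from ds_cases[of med \<epsilon> ch U S] show ?thesis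
  proof (elim disjE exE conjE)
    assume h: "divide_and_share med \<epsilon> ch (U, S) = {(U, S)}"
    show ?thesis unfolding u h
      by (rule ex1I[of _ "(U, S)"]) (use yU in auto)
  next
    fix a i L R
    assume h: "divide_and_share med \<epsilon> ch (U, S) = {({y\<in>U. y$i \<le> a}, L), ({y\<in>U. y$i > a}, R)}"
    show ?thesis
    proof (cases "y$i \<le> a")
      case True
      show ?thesis unfolding u h
        by (rule ex1I[of _ "({y\<in>U. y$i \<le> a}, L)"]) (use yU True in auto)
    next
      case False
      show ?thesis unfolding u h
        by (rule ex1I[of _ "({y\<in>U. y$i > a}, R)"]) (use yU False in auto)
    qed
  qed
qed

lemma tinv_step:
  assumes "tinv C T"
  shows "tinv C (tree_step med \<epsilon> T ch)"
proof (cases "\<exists>u\<in>T. card (snd u) \<ge> 2")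
  case False thus ?thesis using assms by (simp add: tree_step_def)
next
  case True
  define F where "F u = (if card (snd u) \<ge> 2 then divide_and_share med \<epsilon> ch u else {u})" for u
  have T': "tree_step med \<epsilon> T ch = (\<Union>u\<in>T. F u)" using True by (simp add: tree_step_def F_def)
  have Fsub: "fst w \<subseteq> fst u \<and> snd w \<subseteq> snd u" if "w \<in> F u" for w u
    using that ds_sub[of w med \<epsilon> ch u] unfolding F_def by (cases "card (snd u) \<ge> 2") auto
  have Fpart: "\<exists>!w. w \<in> F u \<and> y \<in> fst w" if "y \<in> fst u" for u y
    using that ds_part[of y u med \<epsilon> ch] by (auto simp: F_def)
  show ?thesis unfolding tinv_def T'
  proof (intro conjI allI ballI)
    fix y
    obtain u where u: "u \<in> T" "y \<in> fst u" and uu: "\<And>v. v \<in> T \<Longrightarrow> y \<in> fst v \<Longrightarrow> v = u"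
      using assms unfolding tinv_def by metis
    obtain w where w: "w \<in> F u" "y \<in> fst w" and ww: "\<And>v. v \<in> F u \<Longrightarrow> y \<in> fst v \<Longrightarrow> v = w"
      using Fpart[OF u(2)] by metis
    show "\<exists>!w. w \<in> (\<Union>u\<in>T. F u) \<and> y \<in> fst w"
    proof (rule ex1I[of _ w])
      show "w \<in> (\<Union>u\<in>T. F u) \<and> y \<in> fst w" using w u by auto
    next
      fix v assume v: "v \<in> (\<Union>u\<in>T. F u) \<and> y \<in> fst v"
      then obtain u' where "u' \<in> T" "v \<in> F u'" by auto
      with v Fsub have "y \<in> fst u'" by blast
      with uu \<open>u' \<in> T\<close> have "u' = u" by blast
      with ww \<open>v \<in> F u'\<close> v show "v = w" by blast
    qed
  next
    fix w assume "w \<in> (\<Union>u\<in>T. F u)"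
    then obtain u where "u \<in> T" "w \<in> F u" by auto
    thus "snd w \<subseteq> C" using Fsub assms unfolding tinv_def by blast
  qed
qed

lemma leaf_step:
  assumes "tinv C T"
  shows "leaf_centers x (tree_step med \<epsilon> T ch) = xstep med \<epsilon> x (leaf_centers x T) ch"
proof -
  obtain u where u: "u \<in> T" "x \<in> fst u" "leaf_centers x T = snd u" using tinv_leaf[OF assms] by metis
  obtain U S where uUS: "u = (U, S)" by (cases u)
  have inv': "tinv C (tree_step med \<epsilon> T ch)" by (rule tinv_step[OF assms])
  show ?thesis
  proof (cases "card S \<ge> 2")
    case False
    have "u \<in> tree_step med \<epsilon> T ch" using u False uUS by (auto simp: tree_step_def)
    then have "leaf_centers x (tree_step med \<epsilon> T ch) = S" using leaf_centers_eq[OF inv' _ u(2)] uUS by auto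
    thus ?thesis using u uUS False by (simp add: xstep_def)
  next
    case True
    have sub: "divide_and_share med \<epsilon> ch u \<subseteq> tree_step med \<epsilon> T ch"
      using True u uUS by (auto simp: tree_step_def)
    obtain i \<theta> \<sigma> where ch: "ch = (i, \<theta>, \<sigma>)" by (cases ch)
    define m where "m = med S"
    define R where "R = Max ((\<lambda>c. norm (c - m)) ` S)"
    define Le where "Le = {c\<in>S. c$i \<le> m$i + (\<sigma> + \<epsilon>) * sqrt \<theta> * R}"
    define Ri where "Ri = {c\<in>S. c$i \<ge> m$i + (\<sigma> - \<epsilon>) * sqrt \<theta> * R}"
    define a where "a = m$i + \<sigma> * sqrt \<theta> * R"
    have ds: "divide_and_share med \<epsilon> ch u = (if Le \<noteq> {} \<and> Ri \<noteq> {}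
        then {({y\<in>U. y$i \<le> a}, Le), ({y\<in>U. y$i > a}, Ri)} else {u})"
      unfolding divide_and_share_def ch uUS m_def R_def Le_def Ri_def a_def Let_def by simp
    have xs: "xstep med \<epsilon> x S ch = (if Le \<noteq> {} \<and> Ri \<noteq> {}
        then (if x$i \<le> a then Le else Ri) else S)"
    proof -
      have "lft med \<epsilon> S ch = Le" unfolding lft_def Le_def ch R_def RS_def m_def by simp
      moreover have "rgt med \<epsilon> S ch = Ri" unfolding rgt_def Ri_def ch R_def RS_def m_def by simp
      moreover have "thr med S ch = a" unfolding thr_def a_def ch R_def RS_def m_def by simp
      ultimately show ?thesis unfolding xstep_def using True ch by simp
    qed
    show ?thesis
    proof (cases "Le \<noteq> {} \<and> Ri \<noteq> {}")
      case False
      have "divide_and_share med \<epsilon> ch u = {u}" unfolding ds by (rule if_not_P[OF False])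
      then have "u \<in> divide_and_share med \<epsilon> ch u" by simp
      then have "u \<in> tree_step med \<epsilon> T ch" using sub by blast
      then have "leaf_centers x (tree_step med \<epsilon> T ch) = S" using leaf_centers_eq[OF inv' _ u(2)] uUS by auto
      moreover have "xstep med \<epsilon> x S ch = S" by (subst xs) (rule if_not_P[OF False])
      ultimately show ?thesis using u uUS by simp
    next
      case c2: True
      show ?thesis
      proof (cases "x$i \<le> a")
        case True
        have "({y\<in>U. y$i \<le> a}, Le) \<in> divide_and_share med \<epsilon> ch u" using ds c2 by simp
        then have "({y\<in>U. y$i \<le> a}, Le) \<in> tree_step med \<epsilon> T ch" using sub by blast
        moreover have "x \<in> fst ({y\<in>U. y$i \<le> a}, Le)" using True u(2) uUS by simp
        ultimately have "leaf_centers x (tree_step med \<epsilon> T ch) = Le"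
          by (subst leaf_centers_eq[OF inv']) auto
        thus ?thesis using u uUS c2 True xs by simp
      next
        case False
        have "({y\<in>U. y$i > a}, Ri) \<in> divide_and_share med \<epsilon> ch u" using ds c2 by simp
        then have "({y\<in>U. y$i > a}, Ri) \<in> tree_step med \<epsilon> T ch" using sub by blast
        moreover have "x \<in> fst ({y\<in>U. y$i > a}, Ri)" using False u(2) uUS by simp
        ultimately have "leaf_centers x (tree_step med \<epsilon> T ch) = Ri"
          by (subst leaf_centers_eq[OF inv']) auto
        thus ?thesis using u uUS c2 False xs by simp
      qed
    qed
  qed
qed

lemma run_inv: "tinv C T \<Longrightarrow> tinv C (run med \<epsilon> T w n)"
proof (induction n)
  case 0 thus ?case by simp
next
  case (Suc n) thus ?case using tinv_step by simp
qed

lemma leaf_run: "tinv C T \<Longrightarrow> leaf_centers x (run med \<epsilon> T w n) = xrun med \<epsilon> x (leaf_centers x T) w n"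
proof (induction n)
  case 0 thus ?case by simp
next
  case (Suc n)
  have "tinv C (run med \<epsilon> T w n)" using run_inv Suc.prems by blast
  from leaf_step[OF this] show ?case using Suc by simp
qed

lemma tinv_root: "tinv C (root_tree C)"
  unfolding tinv_def root_tree_def by (intro conjI allI ballI ex1I[of _ "(UNIV, C)"]) auto

lemma norm_sq_vec: "norm (x :: real^'n) ^ 2 = (\<Sum>i\<in>UNIV. (x$i)^2)"
  unfolding power2_norm_eq_inner inner_vec_def by (simp add: power2_eq_square)

lemma median_coord:
  fixes S :: "(real^'d) set"
  assumes fin: "finite S" and med: "is_median S m" and c: "c \<in> S"
  shows "real (card S) * (c$i - m$i)^2 \<le> 2 * (\<Sum>c'\<in>S. (c$i - c'$i)^2)"
proof -
  have lt: "real (card {c\<in>S. c$i < m$i}) \<le> real (card S) / 2"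
   and gt: "real (card {c\<in>S. c$i > m$i}) \<le> real (card S) / 2"
    using med unfolding is_median_def by auto
  show ?thesis
  proof (cases "c$i \<le> m$i")
    case True
    define G where "G = {c'\<in>S. c'$i \<ge> m$i}"
    have G: "G = S - {c\<in>S. c$i < m$i}" unfolding G_def by auto
    have "card G = card S - card {c\<in>S. c$i < m$i}"
      unfolding G using fin by (subst card_Diff_subset) auto
    moreover have "card {c\<in>S. c$i < m$i} \<le> card S" using fin by (intro card_mono) auto
    ultimately have cG: "real (card S) / 2 \<le> real (card G)" using lt by linarith
    have "real (card G) * (c$i - m$i)^2 = (\<Sum>c'\<in>G. (c$i - m$i)^2)" by simp
    also have "\<dots> \<le> (\<Sum>c'\<in>G. (c$i - c'$i)^2)"
    proof (rule sum_mono)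
      fix c' assume "c' \<in> G"
      hence "c'$i \<ge> m$i" unfolding G_def by auto
      hence "(m$i - c$i)^2 \<le> (c'$i - c$i)^2" using True by (intro power_mono) auto
      thus "(c$i - m$i)^2 \<le> (c$i - c'$i)^2" by (simp add: power2_commute)
    qed
    also have "\<dots> \<le> (\<Sum>c'\<in>S. (c$i - c'$i)^2)"
      using fin by (intro sum_mono2) (auto simp: G_def)
    finally have "real (card G) * (c$i - m$i)^2 \<le> (\<Sum>c'\<in>S. (c$i - c'$i)^2)" .
    moreover have "real (card S) / 2 * (c$i - m$i)^2 \<le> real (card G) * (c$i - m$i)^2"
      using cG by (intro mult_right_mono) auto
    ultimately show ?thesis by linarith
  next
    case False
    define G where "G = {c'\<in>S. c'$i \<le> m$i}"
    have G: "G = S - {c\<in>S. c$i > m$i}" unfolding G_def by auto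
    have "card G = card S - card {c\<in>S. c$i > m$i}"
      unfolding G using fin by (subst card_Diff_subset) auto
    moreover have "card {c\<in>S. c$i > m$i} \<le> card S" using fin by (intro card_mono) auto
    ultimately have cG: "real (card S) / 2 \<le> real (card G)" using gt by linarith
    have "real (card G) * (c$i - m$i)^2 = (\<Sum>c'\<in>G. (c$i - m$i)^2)" by simp
    also have "\<dots> \<le> (\<Sum>c'\<in>G. (c$i - c'$i)^2)"
    proof (rule sum_mono)
      fix c' assume "c' \<in> G"
      hence "c'$i \<le> m$i" unfolding G_def by auto
      hence "(c$i - m$i)^2 \<le> (c$i - c'$i)^2" using False by (intro power_mono) auto
      thus "(c$i - m$i)^2 \<le> (c$i - c'$i)^2" by simp
    qed
    also have "\<dots> \<le> (\<Sum>c'\<in>S. (c$i - c'$i)^2)"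
      using fin by (intro sum_mono2) (auto simp: G_def)
    finally have "real (card G) * (c$i - m$i)^2 \<le> (\<Sum>c'\<in>S. (c$i - c'$i)^2)" .
    moreover have "real (card S) / 2 * (c$i - m$i)^2 \<le> real (card G) * (c$i - m$i)^2"
      using cG by (intro mult_right_mono) auto
    ultimately show ?thesis by linarith
  qed
qed

lemma median_bound:
  fixes S :: "(real^'d) set"
  assumes fin: "finite S" and med: "is_median S m" and c: "c \<in> S"
    and D: "\<And>a b. a \<in> S \<Longrightarrow> b \<in> S \<Longrightarrow> norm (a - b) \<le> D"
  shows "norm (c - m) ^ 2 \<le> 2 * D^2"
proof -
  have n0: "real (card S) > 0" using fin c by (auto simp: card_gt_0_iff)
  have "real (card S) * norm (c - m) ^ 2 = (\<Sum>i\<in>UNIV. real (card S) * (c$i - m$i)^2)"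
    by (simp add: norm_sq_vec sum_distrib_left)
  also have "\<dots> \<le> (\<Sum>i\<in>UNIV. 2 * (\<Sum>c'\<in>S. (c$i - c'$i)^2))"
    by (intro sum_mono median_coord[OF fin med c])
  also have "\<dots> = 2 * (\<Sum>c'\<in>S. norm (c - c') ^ 2)"
    by (simp add: norm_sq_vec sum_distrib_left sum.swap[of _ UNIV S])
  also have "\<dots> \<le> 2 * (\<Sum>c'\<in>S. D^2)"
  proof -
    have "norm (c - c') ^ 2 \<le> D^2" if "c' \<in> S" for c'
      using D[OF c that] by (intro power_mono) auto
    thus ?thesis by (intro mult_left_mono sum_mono) auto
  qed
  also have "\<dots> = real (card S) * (2 * D^2)" by simp
  finally show ?thesis using n0 by simp
qed

lemma eps_facts:
  fixes \<epsilon> :: real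
  assumes "0 \<le> \<epsilon>" "\<epsilon> \<le> 1/320"
  shows "1 - 2*\<epsilon> \<le> 1/(1+\<epsilon>)^2" "1/(1-\<epsilon>)^2 \<le> 1 + 3*\<epsilon>"
proof -
  have "(1 - 2*\<epsilon>) * (1+\<epsilon>)^2 \<le> 1"
  proof -
    have "(1 - 2*\<epsilon>) * (1+\<epsilon>)^2 = 1 - 3*\<epsilon>^2 - 2*\<epsilon>^3" by (simp add: power2_eq_square power3_eq_cube algebra_simps)
    moreover have "0 \<le> \<epsilon>^2" "0 \<le> \<epsilon>^3" using assms by auto
    ultimately show ?thesis by linarith
  qed
  thus "1 - 2*\<epsilon> \<le> 1/(1+\<epsilon>)^2" using assms by (simp add: pos_le_divide_eq)
  have "1 \<le> (1 + 3*\<epsilon>) * (1-\<epsilon>)^2"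
  proof -
    have "(1 + 3*\<epsilon>) * (1-\<epsilon>)^2 = 1 + \<epsilon> * (1 - 5*\<epsilon> + 3*\<epsilon>^2)" by (simp add: power2_eq_square algebra_simps)
    moreover have "0 \<le> \<epsilon> * (1 - 5*\<epsilon> + 3*\<epsilon>^2)" using assms by (intro mult_nonneg_nonneg) auto
    ultimately show ?thesis by linarith
  qed
  thus "1/(1-\<epsilon>)^2 \<le> 1 + 3*\<epsilon>" using assms by (simp add: divide_le_eq)
qed

definition ell :: "real \<Rightarrow> real \<Rightarrow> real \<Rightarrow> real \<Rightarrow> real" where
  "ell \<epsilon> \<sigma> p q = max 0 ((max (max (\<sigma>*p) (\<sigma>*q)) 0 / (1+\<epsilon>))^2 - (max (min (\<sigma>*p) (\<sigma>*q)) 0 / (1-\<epsilon>))^2)"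

lemma ell_nonneg: "ell \<epsilon> \<sigma> p q \<ge> 0" by (simp add: ell_def)

lemma ell_sym: "ell \<epsilon> \<sigma> p q = ell \<epsilon> \<sigma> q p"
  unfolding ell_def by (simp add: max.commute min.commute)

lemma sep_ineq_le:
  fixes p q \<epsilon> :: real
  assumes e: "0 \<le> \<epsilon>" "\<epsilon> \<le> 1/320" and pq: "p \<le> q"
  shows "ell \<epsilon> 1 p q + ell \<epsilon> (-1) p q \<ge> (p-q)^2/2 - 5*\<epsilon>*(p^2+q^2)"
proof -
  define A where "A = 1/(1+\<epsilon>)^2"
  define B where "B = 1/(1-\<epsilon>)^2"
  have A: "1 - 2*\<epsilon> \<le> A" and B: "B \<le> 1 + 3*\<epsilon>" using eps_facts[OF e] by (auto simp: A_def B_def)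
  have sq: "(y / z)^2 = y^2 * (1/z^2)" for y z :: real by (simp add: power_divide)
  have ep: "0 \<le> \<epsilon> * p^2" "0 \<le> \<epsilon> * q^2" using e by auto
  consider "0 \<le> p" | "q \<le> 0" | "p < 0" "0 < q" by linarith
  thus ?thesis
  proof cases
    case 1
    have "ell \<epsilon> 1 p q \<ge> q^2 * A - p^2 * B"
    proof (cases "q = 0")
      case True
      with 1 pq have "p = 0" by simp
      thus ?thesis using True by (simp add: ell_def)
    next
      case False
      thus ?thesis unfolding ell_def A_def B_def using 1 pq by (simp add: sq max_def min_def)
    qed
    moreover have "q^2 * A \<ge> q^2 * (1 - 2*\<epsilon>)" using A by (intro mult_left_mono) auto
    moreover have "p^2 * B \<le> p^2 * (1 + 3*\<epsilon>)" using B by (intro mult_left_mono) auto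
    moreover have "(q - p) * (q/2 + 3*p/2) \<ge> 0" using 1 pq by (intro mult_nonneg_nonneg) auto
    moreover have "ell \<epsilon> (-1) p q \<ge> 0" by (rule ell_nonneg)
    moreover have "(p-q)^2 = p^2 - 2*(p*q) + q^2" "5*\<epsilon>*(p^2+q^2) = 5*(\<epsilon>*p^2) + 5*(\<epsilon>*q^2)"
      "q^2*(1-2*\<epsilon>) = q^2 - 2*(\<epsilon>*q^2)" "p^2*(1+3*\<epsilon>) = p^2+3*(\<epsilon>*p^2)"
      "(q-p)*(q/2+3*p/2) = q^2/2 + (p*q) - 3/2*p^2"
      by (simp_all add: field_simps power2_eq_square)
    ultimately show ?thesis using ep by linarith
  next
    case 2
    have "ell \<epsilon> (-1) p q \<ge> p^2 * A - q^2 * B"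
      unfolding ell_def A_def B_def using 2 pq by (simp add: sq max_def min_def)
    moreover have "p^2 * A \<ge> p^2 * (1 - 2*\<epsilon>)" using A by (intro mult_left_mono) auto
    moreover have "q^2 * B \<le> q^2 * (1 + 3*\<epsilon>)" using B by (intro mult_left_mono) auto
    moreover have "(q - p) * (-p/2 - 3*q/2) \<ge> 0" using 2 pq by (intro mult_nonneg_nonneg) auto
    moreover have "ell \<epsilon> 1 p q \<ge> 0" by (rule ell_nonneg)
    moreover have "(p-q)^2 = p^2 - 2*(p*q) + q^2" "5*\<epsilon>*(p^2+q^2) = 5*(\<epsilon>*p^2) + 5*(\<epsilon>*q^2)"
      "p^2*(1-2*\<epsilon>) = p^2 - 2*(\<epsilon>*p^2)" "q^2*(1+3*\<epsilon>) = q^2+3*(\<epsilon>*q^2)"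
      "(q-p)*(-p/2-3*q/2) = p^2/2 + (p*q) - 3/2*q^2"
      by (simp_all add: field_simps power2_eq_square)
    ultimately show ?thesis using ep by linarith
  next
    case 3
    have "ell \<epsilon> 1 p q \<ge> q^2 * A"
      unfolding ell_def A_def B_def using 3 pq by (simp add: sq max_def min_def)
    moreover have "ell \<epsilon> (-1) p q \<ge> p^2 * A"
      unfolding ell_def A_def B_def using 3 pq by (simp add: sq max_def min_def)
    moreover have "q^2 * A \<ge> q^2 * (1 - 2*\<epsilon>)" using A by (intro mult_left_mono) auto
    moreover have "p^2 * A \<ge> p^2 * (1 - 2*\<epsilon>)" using A by (intro mult_left_mono) auto
    moreover have "(p + q)^2 \<ge> 0" by simp
    moreover have "(p-q)^2 = p^2 - 2*(p*q) + q^2" "5*\<epsilon>*(p^2+q^2) = 5*(\<epsilon>*p^2) + 5*(\<epsilon>*q^2)"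
      "p^2*(1-2*\<epsilon>) = p^2 - 2*(\<epsilon>*p^2)" "q^2*(1-2*\<epsilon>) = q^2-2*(\<epsilon>*q^2)"
      "(p+q)^2 = p^2 + 2*(p*q) + q^2"
      by (simp_all add: field_simps power2_eq_square)
    ultimately show ?thesis using ep by linarith
  qed
qed

lemma sep_ineq:
  fixes p q \<epsilon> :: real
  assumes e: "0 \<le> \<epsilon>" "\<epsilon> \<le> 1/320"
  shows "ell \<epsilon> 1 p q + ell \<epsilon> (-1) p q \<ge> (p-q)^2/2 - 5*\<epsilon>*(p^2+q^2)"
proof (cases "p \<le> q")
  case True thus ?thesis using sep_ineq_le[OF e] by blast
next
  case False
  hence "ell \<epsilon> 1 q p + ell \<epsilon> (-1) q p \<ge> (q-p)^2/2 - 5*\<epsilon>*(q^2+p^2)" using sep_ineq_le[OF e] by simp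
  thus ?thesis by (simp add: ell_sym power2_commute add.commute)
qed

lemma RS_ge: "finite S \<Longrightarrow> c \<in> S \<Longrightarrow> norm (c - med S) \<le> RS med S"
  unfolding RS_def by (intro Max_ge) auto

lemma RS_pos:
  assumes "finite S" "a \<in> S" "b \<in> S" "a \<noteq> b"
  shows "RS med S > 0"
proof (rule ccontr)
  assume "\<not> RS med S > 0"
  hence "norm (a - med S) \<le> 0" "norm (b - med S) \<le> 0" using RS_ge[OF assms(1)] assms(2,3) by (meson order_trans not_less)+
  hence "a = med S" "b = med S" by auto
  with assms(4) show False by simp
qed

lemma xstep_sep:
  assumes "card S \<ge> 2" "a \<in> lft med \<epsilon> S ch" "a \<notin> rgt med \<epsilon> S ch" "b \<in> rgt med \<epsilon> S ch" "b \<notin> lft med \<epsilon> S ch"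
  shows "\<not> (a \<in> xstep med \<epsilon> x S ch \<and> b \<in> xstep med \<epsilon> x S ch)"
proof -
  have ne: "lft med \<epsilon> S ch \<noteq> {} \<and> rgt med \<epsilon> S ch \<noteq> {}" using assms by auto
  have "xstep med \<epsilon> x S ch = lft med \<epsilon> S ch \<or> xstep med \<epsilon> x S ch = rgt med \<epsilon> S ch"
    unfolding xstep_def using assms(1) ne by simp
  thus ?thesis using assms by auto
qed

lemma sep_core:
  assumes c2: "card S \<ge> 2" and ab: "a \<in> S" "b \<in> S" and sg: "\<sigma> \<in> {-1, 1}"
    and E0: "0 \<le> \<epsilon> * sqrt \<theta> * RS med S"
    and ha: "\<sigma> * (a$i - med S$i) < (1-\<epsilon>) * sqrt \<theta> * RS med S"
    and hb: "\<sigma> * (b$i - med S$i) > (1+\<epsilon>) * sqrt \<theta> * RS med S"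
  shows "\<not> (a \<in> xstep med \<epsilon> x S (i, \<theta>, \<sigma>) \<and> b \<in> xstep med \<epsilon> x S (i, \<theta>, \<sigma>))"
proof -
  define t where "t = sqrt \<theta> * RS med S"
  define E where "E = \<epsilon> * sqrt \<theta> * RS med S"
  have e1: "(1-\<epsilon>) * sqrt \<theta> * RS med S = t - E" "(1+\<epsilon>) * sqrt \<theta> * RS med S = t + E"
    "(1+\<epsilon>) * sqrt \<theta> * RS med S = t + E" "(\<sigma>+\<epsilon>) * sqrt \<theta> * RS med S = \<sigma>*t + E"
    "(\<sigma>-\<epsilon>) * sqrt \<theta> * RS med S = \<sigma>*t - E"
    "(\<epsilon> - 1) * sqrt \<theta> * RS med S = E - t" "(- 1 - \<epsilon>) * sqrt \<theta> * RS med S = - t - E"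
    unfolding t_def E_def by (simp_all add: algebra_simps)
  have E0': "0 \<le> E" using E0 by (simp add: E_def)
  from sg consider "\<sigma> = 1" | "\<sigma> = -1" by auto
  thus ?thesis
  proof cases
    case 1
    have "a \<in> lft med \<epsilon> S (i, \<theta>, \<sigma>)" "a \<notin> rgt med \<epsilon> S (i, \<theta>, \<sigma>)"
         "b \<in> rgt med \<epsilon> S (i, \<theta>, \<sigma>)" "b \<notin> lft med \<epsilon> S (i, \<theta>, \<sigma>)"
      using ab ha hb E0' 1 unfolding lft_def rgt_def by (simp_all add: e1)
    thus ?thesis using xstep_sep[OF c2] by blast
  next
    case 2
    have "b \<in> lft med \<epsilon> S (i, \<theta>, \<sigma>)" "b \<notin> rgt med \<epsilon> S (i, \<theta>, \<sigma>)"
         "a \<in> rgt med \<epsilon> S (i, \<theta>, \<sigma>)" "a \<notin> lft med \<epsilon> S (i, \<theta>, \<sigma>)"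
      using ab ha hb E0' 2 unfolding lft_def rgt_def by (simp_all add: e1)
    thus ?thesis using xstep_sep[OF c2] by blast
  qed
qed

lemma sep_step:
  fixes S :: "(real^'d) set" and i :: 'd and \<sigma> \<theta> \<epsilon> :: real
  assumes fin: "finite S" and c2: "card S \<ge> 2" and ab: "a \<in> S" "b \<in> S" and R: "RS med S > 0"
    and e: "0 \<le> \<epsilon>" "\<epsilon> < 1" and sg: "\<sigma> \<in> {-1, 1}"
  defines "P \<equiv> \<sigma> * (a$i - med S$i) / RS med S"
      and "Q \<equiv> \<sigma> * (b$i - med S$i) / RS med S"
  assumes th: "(max (min P Q) 0 / (1-\<epsilon>))^2 < \<theta>" "\<theta> < (max (max P Q) 0 / (1+\<epsilon>))^2"
  shows "\<not> (a \<in> xstep med \<epsilon> x S (i, \<theta>, \<sigma>) \<and> b \<in> xstep med \<epsilon> x S (i, \<theta>, \<sigma>))"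
proof -
  define v where "v = max (min P Q) 0 / (1-\<epsilon>)"
  define u where "u = max (max P Q) 0 / (1+\<epsilon>)"
  define s where "s = sqrt \<theta>"
  have v0: "0 \<le> v" "0 \<le> u" using e by (auto simp: v_def u_def)
  have "v < s" unfolding s_def using th(1) v0 by (intro real_less_rsqrt) (simp add: v_def)
  have "s < u" unfolding s_def
  proof -
    have "sqrt \<theta> < sqrt (u^2)" using th(2) by (intro real_sqrt_less_mono) (simp add: u_def)
    thus "sqrt \<theta> < u" using v0 by simp
  qed
  have s0: "0 < s" using \<open>v < s\<close> v0 by linarith
  have "max (min P Q) 0 < (1-\<epsilon>) * s" using \<open>v < s\<close> e unfolding v_def by (simp add: divide_less_eq mult.commute)
  hence m1: "min P Q < (1-\<epsilon>) * s" by linarith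
  have "(1+\<epsilon>) * s < max (max P Q) 0" using \<open>s < u\<close> e unfolding u_def by (simp add: less_divide_eq mult.commute)
  moreover have "0 < (1+\<epsilon>) * s" using e s0 by simp
  ultimately have m2: "max P Q > (1+\<epsilon>) * s" by linarith
  have E0: "0 \<le> \<epsilon> * sqrt \<theta> * RS med S" using e R s0 by (simp add: s_def)
  have scale: "y / RS med S < z \<longleftrightarrow> y < z * RS med S" "z < y / RS med S \<longleftrightarrow> z * RS med S < y" for y z
    using R by (simp_all add: divide_less_eq less_divide_eq)
  show ?thesis
  proof (cases "P \<le> Q")
    case True
    have "P < (1-\<epsilon>) * s" "Q > (1+\<epsilon>) * s" using m1 m2 True by auto
    hence "\<sigma> * (a$i - med S$i) < (1-\<epsilon>) * sqrt \<theta> * RS med S"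
          "\<sigma> * (b$i - med S$i) > (1+\<epsilon>) * sqrt \<theta> * RS med S"
      unfolding P_def Q_def scale s_def by auto
    thus ?thesis using sep_core[OF c2 ab sg E0] by blast
  next
    case False
    have "Q < (1-\<epsilon>) * s" "P > (1+\<epsilon>) * s" using m1 m2 False by auto
    hence "\<sigma> * (b$i - med S$i) < (1-\<epsilon>) * sqrt \<theta> * RS med S"
          "\<sigma> * (a$i - med S$i) > (1+\<epsilon>) * sqrt \<theta> * RS med S"
      unfolding P_def Q_def scale s_def by auto
    thus ?thesis using sep_core[OF c2 ab(2,1) sg E0] by blast
  qed
qed

lemma prob_choice: "prob_space (choice_measure :: 'd::finite choice measure)"
  unfolding choice_measure_def
  by (intro prob_space_pair prob_space_uniform_count_measure prob_space_uniform_measure) auto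

lemma space_choice: "space (choice_measure :: 'd::finite choice measure) = UNIV \<times> (UNIV \<times> {-1, 1})"
  unfolding choice_measure_def by (simp add: space_pair_measure space_uniform_count_measure)

lemma meas_fst_any: "(\<lambda>ch. h (fst ch)) \<in> borel_measurable (choice_measure :: 'd::finite choice measure)"
proof -
  have "h \<in> borel_measurable (uniform_count_measure (UNIV :: 'd set))"
    by (subst measurable_cong_sets[OF sets_uniform_count_measure_count_space refl]) simp
  thus ?thesis unfolding choice_measure_def by (rule measurable_compose[OF measurable_fst])
qed

lemma meas_theta: "(\<lambda>ch. fst (snd ch)) \<in> borel_measurable (choice_measure :: 'd::finite choice measure)"
proof -
  have "(\<lambda>x. x) \<in> borel_measurable (uniform_measure lborel {0<..<(1::real)})"
    by (subst measurable_cong_sets[OF sets_uniform_measure refl]) simp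
  hence "fst \<in> borel_measurable (uniform_measure lborel {0<..<(1::real)} \<Otimes>\<^sub>M uniform_count_measure {-1, 1::real})"
    by (rule measurable_compose[OF measurable_fst])
  thus ?thesis unfolding choice_measure_def by (rule measurable_compose[OF measurable_snd])
qed

lemma meas_sigma: "(\<lambda>ch. snd (snd ch)) \<in> borel_measurable (choice_measure :: 'd::finite choice measure)"
proof -
  have "(\<lambda>x. x) \<in> borel_measurable (uniform_count_measure {-1, 1::real})"
    by (subst measurable_cong_sets[OF sets_uniform_count_measure_count_space refl]) simp
  hence "snd \<in> borel_measurable (uniform_measure lborel {0<..<(1::real)} \<Otimes>\<^sub>M uniform_count_measure {-1, 1::real})"
    by (rule measurable_compose[OF measurable_snd])
  thus ?thesis unfolding choice_measure_def by (rule measurable_compose[OF measurable_snd])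
qed

lemma filt_meas:
  assumes "finite S0" "S \<subseteq> S0" "\<And>c. c \<in> S \<Longrightarrow> Measurable.pred M (P c)"
  shows "(\<lambda>\<omega>. {c\<in>S. P c \<omega>}) \<in> measurable M (count_space (Pow S0))"
proof (subst measurable_count_space_eq2)
  show "finite (Pow S0)" using assms by simp
  show "(\<lambda>\<omega>. {c\<in>S. P c \<omega>}) \<in> space M \<rightarrow> Pow S0 \<and>
    (\<forall>T\<in>Pow S0. (\<lambda>\<omega>. {c\<in>S. P c \<omega>}) -` {T} \<inter> space M \<in> sets M)"
  proof (intro conjI ballI)
    show "(\<lambda>\<omega>. {c\<in>S. P c \<omega>}) \<in> space M \<rightarrow> Pow S0" using assms by auto
    fix T assume T: "T \<in> Pow S0"
    have eq: "(\<lambda>\<omega>. {c\<in>S. P c \<omega>}) -` {T} \<inter> space M = {\<omega>\<in>space M. \<forall>c\<in>S0. (c \<in> S \<and> P c \<omega>) = (c \<in> T)}"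
      using T assms(2) by auto
    have "Measurable.pred M (\<lambda>\<omega>. \<forall>c\<in>S0. (c \<in> S \<and> P c \<omega>) = (c \<in> T))"
    proof (rule pred_intros_finite(3)[where P="\<lambda>\<omega> c. (c \<in> S \<and> P c \<omega>) = (c \<in> T)", OF assms(1)])
      fix c assume "c \<in> S0"
      show "Measurable.pred M (\<lambda>\<omega>. (c \<in> S \<and> P c \<omega>) = (c \<in> T))"
      proof (cases "c \<in> S")
        case True
        have "Measurable.pred M (P c)" using assms(3)[OF True] .
        hence "Measurable.pred M (\<lambda>\<omega>. P c \<omega> = (c \<in> T))" by (intro pred_intros_logic) auto
        thus ?thesis using True by simp
      qed simp
    qed
    thus "(\<lambda>\<omega>. {c\<in>S. P c \<omega>}) -` {T} \<inter> space M \<in> sets M" unfolding eq Measurable.pred_def .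
  qed
qed

lemma pred_le_choice:
  fixes f g :: "'d::finite choice \<Rightarrow> real"
  assumes "f \<in> borel_measurable choice_measure" "g \<in> borel_measurable choice_measure"
  shows "Measurable.pred choice_measure (\<lambda>ch. f ch \<le> g ch)"
  using borel_measurable_le[OF assms] unfolding Measurable.pred_def .

lemma lft_meas:
  assumes "finite S0" "S \<subseteq> S0"
  shows "(\<lambda>ch. lft med \<epsilon> S ch) \<in> measurable (choice_measure :: 'd::finite choice measure) (count_space (Pow S0))"
  unfolding lft_def
proof (rule filt_meas[OF assms])
  fix c :: "real^'d" assume "c \<in> S"
  show "Measurable.pred choice_measure (\<lambda>ch. c $ fst ch \<le> med S $ fst ch + (snd (snd ch) + \<epsilon>) * sqrt (fst (snd ch)) * RS med S)"
  proof -
    note [measurable] = meas_fst_any[of "\<lambda>i. c $ i"] meas_fst_any[of "\<lambda>i. med S $ i"] meas_theta meas_sigma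
    show ?thesis by (rule pred_le_choice) measurable
  qed
qed

lemma rgt_meas:
  assumes "finite S0" "S \<subseteq> S0"
  shows "(\<lambda>ch. rgt med \<epsilon> S ch) \<in> measurable (choice_measure :: 'd::finite choice measure) (count_space (Pow S0))"
  unfolding rgt_def
proof (rule filt_meas[OF assms])
  fix c :: "real^'d" assume "c \<in> S"
  show "Measurable.pred choice_measure (\<lambda>ch. med S $ fst ch + (snd (snd ch) - \<epsilon>) * sqrt (fst (snd ch)) * RS med S \<le> c $ fst ch)"
  proof -
    note [measurable] = meas_fst_any[of "\<lambda>i. c $ i"] meas_fst_any[of "\<lambda>i. med S $ i"] meas_theta meas_sigma
    show ?thesis by (rule pred_le_choice) measurable
  qed
qed

lemma xstep_meas:
  assumes "finite S0" "S \<subseteq> S0"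
  shows "(\<lambda>ch. xstep med \<epsilon> x S ch) \<in> measurable (choice_measure :: 'd::finite choice measure) (count_space (Pow S0))"
proof (cases "card S \<ge> 2")
  case False
  thus ?thesis unfolding xstep_def using assms by simp
next
  case True
  have L: "(\<lambda>ch. lft med \<epsilon> S ch) \<in> measurable choice_measure (count_space (Pow S0))" by (rule lft_meas[OF assms])
  have R: "(\<lambda>ch. rgt med \<epsilon> S ch) \<in> measurable choice_measure (count_space (Pow S0))" by (rule rgt_meas[OF assms])
  have pL: "Measurable.pred choice_measure (\<lambda>ch. lft med \<epsilon> S ch \<noteq> {} \<and> rgt med \<epsilon> S ch \<noteq> {})"
  proof -
    have "{ch \<in> space choice_measure. lft med \<epsilon> S ch = {}} \<in> sets choice_measure"
      using measurable_sets[OF L, of "{{}}"] by (simp add: vimage_def Int_def conj_commute)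
    moreover have "{ch \<in> space choice_measure. rgt med \<epsilon> S ch = {}} \<in> sets choice_measure"
      using measurable_sets[OF R, of "{{}}"] by (simp add: vimage_def Int_def conj_commute)
    ultimately have "space choice_measure - ({ch \<in> space choice_measure. lft med \<epsilon> S ch = {}} \<union> {ch \<in> space choice_measure. rgt med \<epsilon> S ch = {}}) \<in> sets choice_measure"
      by blast
    moreover have "space choice_measure - ({ch \<in> space choice_measure. lft med \<epsilon> S ch = {}} \<union> {ch \<in> space choice_measure. rgt med \<epsilon> S ch = {}})
       = {ch \<in> space choice_measure. lft med \<epsilon> S ch \<noteq> {} \<and> rgt med \<epsilon> S ch \<noteq> {}}" by blast
    ultimately show ?thesis unfolding Measurable.pred_def by simp
  qed
  have pT: "Measurable.pred choice_measure (\<lambda>ch. x $ fst ch \<le> thr med S ch)"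
    unfolding thr_def
  proof -
    note [measurable] = meas_fst_any[of "\<lambda>i. x $ i"] meas_fst_any[of "\<lambda>i. med S $ i"] meas_theta meas_sigma
    show "Measurable.pred choice_measure (\<lambda>ch. x $ fst ch \<le> med S $ fst ch + snd (snd ch) * sqrt (fst (snd ch)) * RS med S)"
      by (rule pred_le_choice) measurable
  qed
  have "(\<lambda>ch. if lft med \<epsilon> S ch \<noteq> {} \<and> rgt med \<epsilon> S ch \<noteq> {}
       then (if x $ fst ch \<le> thr med S ch then lft med \<epsilon> S ch else rgt med \<epsilon> S ch)
       else S) \<in> measurable choice_measure (count_space (Pow S0))"
    using pL pT L R assms unfolding Measurable.pred_def
    by (intro measurable_If) auto
  thus ?thesis unfolding xstep_def using True by simp
qed

lemma measure_Times_sf: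
  assumes "sigma_finite_measure M" "A \<in> sets N" "B \<in> sets M"
  shows "measure (N \<Otimes>\<^sub>M M) (A \<times> B) = measure N A * measure M B"
  using sigma_finite_measure.emeasure_pair_measure_Times[OF assms]
  by (simp add: measure_def enn2real_mult)

lemma rect_measure:
  fixes l r \<sigma> :: real and i :: "'d::finite"
  assumes "0 \<le> l" "l \<le> r" "r \<le> 1" "\<sigma> \<in> {-1, 1}"
  shows "measure (choice_measure :: 'd choice measure) ({i} \<times> ({l<..<r} \<times> {\<sigma>})) = (r - l) / (2 * CARD('d))"
proof -
  let ?UD = "uniform_count_measure (UNIV :: 'd set)"
  let ?UT = "uniform_measure lborel {0<..<(1::real)}"
  let ?US = "uniform_count_measure {-1, 1::real}"
  have pT: "prob_space ?UT" by (intro prob_space_uniform_measure) auto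
  have pS: "prob_space ?US" by (intro prob_space_uniform_count_measure) auto
  have sfS: "sigma_finite_measure ?US" by (rule prob_space_imp_sigma_finite[OF pS])
  have sfTS: "sigma_finite_measure (?UT \<Otimes>\<^sub>M ?US)" by (rule prob_space_imp_sigma_finite[OF prob_space_pair[OF pT pS]])
  have s1: "{l<..<r} \<in> sets ?UT" by simp
  have s2: "{\<sigma>} \<in> sets ?US" using assms(4) by (simp add: sets_uniform_count_measure)
  have s3: "{i} \<in> sets ?UD" by (simp add: sets_uniform_count_measure)
  have m1: "measure ?UD {i} = 1 / CARD('d)" by (simp add: measure_uniform_count_measure)
  have m3: "measure ?US {\<sigma>} = 1 / 2" using assms(4) by (auto simp: measure_uniform_count_measure)
  have "{0<..<(1::real)} \<inter> {l<..<r} = {l<..<r}" using assms by auto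
  have m2: "measure ?UT {l<..<r} = r - l"
  proof -
    have d1: "ennreal (r - l) / 1 = ennreal (r - l)" by (simp add: divide_ennreal_def)
    show ?thesis using assms \<open>{0<..<(1::real)} \<inter> {l<..<r} = {l<..<r}\<close>
      by (simp add: measure_def emeasure_uniform_measure d1)
  qed
  have "measure choice_measure ({i} \<times> ({l<..<r} \<times> {\<sigma>})) = measure ?UD {i} * (measure ?UT {l<..<r} * measure ?US {\<sigma>})"
    unfolding choice_measure_def
    by (simp add: measure_Times_sf[OF sfTS s3] measure_Times_sf[OF sfS s1 s2] s1 s2 pair_measureI)
  thus ?thesis using m1 m2 m3 by simp
qed

lemma xstep_sub: "xstep med \<epsilon> x S ch \<subseteq> S"
  unfolding xstep_def lft_def rgt_def by auto

lemma step_bound: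
  fixes S S0 :: "(real^'d::finite) set" and a b :: "real^'d" and \<epsilon> D0 :: real
  assumes fin0: "finite S0" and sub: "S \<subseteq> S0" and ab: "a \<in> S" "b \<in> S"
    and medS: "is_median S (med S)"
    and D0: "0 < D0" "\<And>c c'. c \<in> S0 \<Longrightarrow> c' \<in> S0 \<Longrightarrow> norm (c - c') \<le> D0"
    and far: "D0 / 2 \<le> norm (a - b)"
    and e: "0 \<le> \<epsilon>" "\<epsilon> \<le> 1/320"
  shows "{ch \<in> space choice_measure. a \<in> xstep med \<epsilon> x S ch \<and> b \<in> xstep med \<epsilon> x S ch} \<in> sets choice_measure"
    and "measure choice_measure {ch \<in> space choice_measure. a \<in> xstep med \<epsilon> x S ch \<and> b \<in> xstep med \<epsilon> x S ch}
           \<le> 1 - 1 / (64 * CARD('d))"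
proof -
  let ?M = "choice_measure :: 'd choice measure"
  define X where "X = {ch \<in> space ?M. a \<in> xstep med \<epsilon> x S ch \<and> b \<in> xstep med \<epsilon> x S ch}"
  have XS: "X = (\<lambda>ch. xstep med \<epsilon> x S ch) -` {T \<in> Pow S0. a \<in> T \<and> b \<in> T} \<inter> space ?M"
    unfolding X_def using xstep_sub[of med \<epsilon> x S] sub by blast
  have Xm: "X \<in> sets ?M" unfolding XS
    by (rule measurable_sets[OF xstep_meas[OF fin0 sub]]) auto
  thus "{ch \<in> space choice_measure. a \<in> xstep med \<epsilon> x S ch \<and> b \<in> xstep med \<epsilon> x S ch} \<in> sets choice_measure"
    unfolding X_def .
  interpret P: prob_space ?M by (rule prob_choice)
  have finS: "finite S" using fin0 sub finite_subset by blast
  have abne: "a \<noteq> b" using far D0(1) by auto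
  have c2: "card S \<ge> 2"
  proof -
    have "card {a, b} \<le> card S" using ab finS by (intro card_mono) auto
    thus ?thesis using abne by simp
  qed
  define m where "m = med S"
  define R where "R = RS med S"
  have R0: "R > 0" unfolding R_def by (rule RS_pos[OF finS ab abne])
  have aR: "norm (a - m) \<le> R" "norm (b - m) \<le> R" unfolding R_def m_def using RS_ge[OF finS] ab by auto
  have RD: "R^2 \<le> 2 * D0^2"
  proof -
    have "R \<in> (\<lambda>c. norm (c - med S)) ` S" unfolding R_def RS_def using finS ab by (intro Max_in) auto
    then obtain c where c: "c \<in> S" "R = norm (c - med S)" by auto
    show ?thesis unfolding c(2)
      by (rule median_bound[OF finS medS c(1)]) (use sub D0(2) in blast)
  qed
  have ab2: "D0^2 / 4 \<le> norm (a - b)^2"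
  proof -
    have "(D0/2)^2 \<le> norm (a - b)^2" using far D0(1) by (intro power_mono) auto
    thus ?thesis by (simp add: power_divide)
  qed
  have ratio: "1/8 \<le> norm (a - b)^2 / R^2"
    using ab2 RD R0 by (simp add: pos_le_divide_eq)
  define p where "p i = (a$i - m$i) / R" for i
  define q where "q i = (b$i - m$i) / R" for i
  have pb: "\<bar>p i\<bar> \<le> 1" "\<bar>q i\<bar> \<le> 1" for i
  proof -
    have "\<bar>(a - m)$i\<bar> \<le> R" "\<bar>(b - m)$i\<bar> \<le> R" using component_le_norm_cart aR order_trans by blast+
    thus "\<bar>p i\<bar> \<le> 1" "\<bar>q i\<bar> \<le> 1" using R0 by (auto simp: p_def q_def abs_divide divide_le_eq)
  qed
  define v where "v i \<sigma> = max (min (\<sigma> * p i) (\<sigma> * q i)) 0 / (1-\<epsilon>)" for i \<sigma>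
  define u where "u i \<sigma> = max (max (\<sigma> * p i) (\<sigma> * q i)) 0 / (1+\<epsilon>)" for i \<sigma>
  define A where "A k = {fst k} \<times> ({(v (fst k) (snd k))^2 <..< (u (fst k) (snd k))^2} \<times> {snd k})" for k :: "'d \<times> real"
  define I where "I = (UNIV :: 'd set) \<times> {-1, 1::real}"
  have finI: "finite I" unfolding I_def by simp
  have Am: "A k \<in> sets ?M" if "k \<in> I" for k
    using that unfolding A_def I_def choice_measure_def
    by (intro pair_measureI) (auto simp: sets_uniform_count_measure)
  have disj: "disjoint_family_on A I"
    unfolding disjoint_family_on_def A_def by auto
  have e1: "\<epsilon> < 1" using e by simp
  have sep: "X \<inter> (\<Union>k\<in>I. A k) = {}"
  proof (rule ccontr)
    assume "X \<inter> (\<Union>k\<in>I. A k) \<noteq> {}"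
    then obtain ch k where ch: "ch \<in> X" "k \<in> I" "ch \<in> A k" by blast
    obtain i \<theta> \<sigma> where chi: "ch = (i, \<theta>, \<sigma>)" by (cases ch) auto
    have k: "k = (i, \<sigma>)" using ch(3) chi unfolding A_def by (cases k) auto
    have sg: "\<sigma> \<in> {-1, 1}" using ch(2) k unfolding I_def by auto
    have th: "(v i \<sigma>)^2 < \<theta>" "\<theta> < (u i \<sigma>)^2" using ch(3) chi k unfolding A_def by auto
    have "\<not> (a \<in> xstep med \<epsilon> x S (i, \<theta>, \<sigma>) \<and> b \<in> xstep med \<epsilon> x S (i, \<theta>, \<sigma>))"
      by (rule sep_step[OF finS c2 ab R0[unfolded R_def] e(1) e1 sg])
         (use th in \<open>simp_all add: v_def u_def p_def q_def m_def R_def\<close>)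
    thus False using ch(1) chi unfolding X_def by auto
  qed
  have mA: "measure ?M (A (i, \<sigma>)) = ell \<epsilon> \<sigma> (p i) (q i) / (2 * CARD('d))" if "\<sigma> \<in> {-1, 1}" for i \<sigma>
  proof -
    have u1: "u i \<sigma> \<le> 1"
    proof -
      have "\<sigma> * p i \<le> 1" "\<sigma> * q i \<le> 1" using that pb[of i] by (auto simp: abs_le_iff)
      hence "max (max (\<sigma> * p i) (\<sigma> * q i)) 0 \<le> 1" by simp
      moreover have "1 \<le> 1 + \<epsilon>" using e by simp
      ultimately show ?thesis unfolding u_def using e
        by (simp add: divide_le_eq)
    qed
    have u0: "0 \<le> u i \<sigma>" "0 \<le> v i \<sigma>" using e1 e by (auto simp: u_def v_def)
    have u21: "(u i \<sigma>)^2 \<le> 1" using u1 u0 by (simp add: power_le_one)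
    have ell_eq: "ell \<epsilon> \<sigma> (p i) (q i) = max 0 ((u i \<sigma>)^2 - (v i \<sigma>)^2)"
      unfolding ell_def u_def v_def ..
    show ?thesis
    proof (cases "(v i \<sigma>)^2 \<le> (u i \<sigma>)^2")
      case True
      have "measure ?M (A (i, \<sigma>)) = ((u i \<sigma>)^2 - (v i \<sigma>)^2) / (2 * CARD('d))"
        unfolding A_def using rect_measure[of "(v i \<sigma>)^2" "(u i \<sigma>)^2" \<sigma> i] True u21 that by simp
      thus ?thesis using True ell_eq by simp
    next
      case False
      hence "A (i, \<sigma>) = {}" unfolding A_def by auto
      thus ?thesis using False ell_eq by simp
    qed
  qed
  have sumA: "measure ?M (\<Union>k\<in>I. A k) = (\<Sum>i\<in>UNIV. (ell \<epsilon> 1 (p i) (q i) + ell \<epsilon> (-1) (p i) (q i))) / (2 * CARD('d))"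
  proof -
    have "measure ?M (\<Union>k\<in>I. A k) = (\<Sum>k\<in>I. measure ?M (A k))"
      using finI Am disj by (intro P.finite_measure_finite_Union) auto
    also have "\<dots> = (\<Sum>i\<in>UNIV. \<Sum>\<sigma>\<in>{-1, 1::real}. measure ?M (A (i, \<sigma>)))"
      unfolding I_def sum.cartesian_product by simp
    also have "\<dots> = (\<Sum>i\<in>UNIV. (ell \<epsilon> 1 (p i) (q i) + ell \<epsilon> (-1) (p i) (q i)) / (2 * CARD('d)))"
      by (intro sum.cong refl) (simp add: mA add_divide_distrib)
    finally show ?thesis by (simp add: sum_divide_distrib)
  qed
  have lower: "(\<Sum>i\<in>UNIV. (ell \<epsilon> 1 (p i) (q i) + ell \<epsilon> (-1) (p i) (q i))) \<ge> 1/32"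
  proof -
    have "(\<Sum>i\<in>UNIV. (ell \<epsilon> 1 (p i) (q i) + ell \<epsilon> (-1) (p i) (q i)))
       \<ge> (\<Sum>i\<in>UNIV. (p i - q i)^2/2 - 5*\<epsilon>*((p i)^2 + (q i)^2))"
      by (intro sum_mono sep_ineq[OF e])
    moreover have "(\<Sum>i\<in>UNIV. (p i - q i)^2/2 - 5*\<epsilon>*((p i)^2 + (q i)^2))
       = (\<Sum>i\<in>UNIV. (p i - q i)^2)/2 - 5*\<epsilon>*((\<Sum>i\<in>UNIV. (p i)^2) + (\<Sum>i\<in>UNIV. (q i)^2))"
      by (simp add: sum_subtractf sum_divide_distrib sum_distrib_left[symmetric] sum.distrib)
    moreover have "(\<Sum>i\<in>UNIV. (p i - q i)^2) = norm (a - b)^2 / R^2"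
    proof -
      have "(p i - q i)^2 = ((a - b)$i)^2 / R^2" for i
        unfolding p_def q_def by (simp add: power_divide diff_divide_distrib[symmetric])
      thus ?thesis by (simp add: norm_sq_vec sum_divide_distrib)
    qed
    moreover have "(\<Sum>i\<in>UNIV. (p i)^2) \<le> 1" "(\<Sum>i\<in>UNIV. (q i)^2) \<le> 1"
    proof -
      have "(p i)^2 = ((a - m)$i)^2 / R^2" "(q i)^2 = ((b - m)$i)^2 / R^2" for i
        unfolding p_def q_def by (simp_all add: power_divide)
      hence "(\<Sum>i\<in>UNIV. (p i)^2) = norm (a - m)^2 / R^2" "(\<Sum>i\<in>UNIV. (q i)^2) = norm (b - m)^2 / R^2"
        by (simp_all add: norm_sq_vec sum_divide_distrib)
      moreover have "norm (a - m)^2 \<le> R^2" "norm (b - m)^2 \<le> R^2" using aR by (auto intro: power_mono)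
      ultimately show "(\<Sum>i\<in>UNIV. (p i)^2) \<le> 1" "(\<Sum>i\<in>UNIV. (q i)^2) \<le> 1" using R0 by auto
    qed
    moreover have "5*\<epsilon>*((\<Sum>i\<in>UNIV. (p i)^2) + (\<Sum>i\<in>UNIV. (q i)^2)) \<le> 5*\<epsilon>*2"
      using calculation(4,5) e by (intro mult_left_mono) auto
    ultimately show ?thesis using ratio e by linarith
  qed
  have "measure ?M X \<le> measure ?M (space ?M - (\<Union>k\<in>I. A k))"
  proof (rule P.finite_measure_mono)
    show "X \<subseteq> space ?M - (\<Union>k\<in>I. A k)" using sep by (auto simp: X_def)
    have "(\<Union>k\<in>I. A k) \<in> sets ?M" using finI Am by (intro sets.finite_UN) auto
    thus "space ?M - (\<Union>k\<in>I. A k) \<in> sets ?M" by (intro sets.Diff sets.top)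
  qed
  also have "\<dots> = 1 - measure ?M (\<Union>k\<in>I. A k)"
    using Am finI by (intro P.prob_compl) auto
  also have "\<dots> \<le> 1 - 1 / (64 * CARD('d))"
  proof -
    have "1/32 / (2 * CARD('d)) \<le> (\<Sum>i\<in>UNIV. (ell \<epsilon> 1 (p i) (q i) + ell \<epsilon> (-1) (p i) (q i))) / (2 * CARD('d))"
      using lower by (intro divide_right_mono) auto
    thus ?thesis unfolding sumA by simp
  qed
  finally show "measure choice_measure {ch \<in> space choice_measure. a \<in> xstep med \<epsilon> x S ch \<and> b \<in> xstep med \<epsilon> x S ch}
           \<le> 1 - 1 / (64 * CARD('d))" unfolding X_def .
qed

lemma xrun_sub: "xrun med \<epsilon> x S w n \<subseteq> S"
proof (induction n)
  case (Suc n) thus ?case using xstep_sub[of med \<epsilon> x "xrun med \<epsilon> x S w n" "w n"] by auto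
qed simp

lemma xrun_cong: "(\<And>k. k < n \<Longrightarrow> w k = w' k) \<Longrightarrow> xrun med \<epsilon> x S w n = xrun med \<epsilon> x S w' n"
  by (induction n) auto

lemma xrun_meas:
  assumes fin0: "finite S0" and sub: "S \<subseteq> S0" and nI: "{..<n} \<subseteq> I"
  shows "(\<lambda>w. xrun med \<epsilon> x S w n) \<in> measurable (PiM I (\<lambda>_. choice_measure :: 'd::finite choice measure)) (count_space (Pow S0))"
  using nI
proof (induction n)
  case 0 thus ?case using sub by simp
next
  case (Suc n)
  have IH: "(\<lambda>w. xrun med \<epsilon> x S w n) \<in> measurable (PiM I (\<lambda>_. choice_measure :: 'd choice measure)) (count_space (Pow S0))"
  proof -
    have "{..<n} \<subseteq> I" using Suc.prems by auto
    thus ?thesis by (rule Suc.IH)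
  qed
  have nI': "n \<in> I" using Suc.prems by auto
  have pair: "(\<lambda>w. (xrun med \<epsilon> x S w n, w n)) \<in> measurable (PiM I (\<lambda>_. choice_measure :: 'd choice measure))
      (count_space (Pow S0) \<Otimes>\<^sub>M (choice_measure :: 'd choice measure))"
    by (intro measurable_Pair IH measurable_component_singleton[OF nI'])
  have st: "(\<lambda>(T, ch). xstep med \<epsilon> x T ch) \<in> measurable (count_space (Pow S0) \<Otimes>\<^sub>M (choice_measure :: 'd choice measure)) (count_space (Pow S0))"
  proof (rule measurable_pair_measure_countable1)
    show "countable (Pow S0)" using fin0 by (simp add: countable_finite)
    fix T assume "T \<in> Pow S0"
    thus "(\<lambda>ch. case (T, ch) of (T, ch) \<Rightarrow> xstep med \<epsilon> x T ch) \<in> measurable choice_measure (count_space (Pow S0))"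
      using xstep_meas[OF fin0, of T med \<epsilon> x] by simp
  qed
  have "(\<lambda>w. (\<lambda>(T, ch). xstep med \<epsilon> x T ch) (xrun med \<epsilon> x S w n, w n)) \<in> measurable (PiM I (\<lambda>_. choice_measure :: 'd choice measure)) (count_space (Pow S0))"
    by (rule measurable_compose[OF pair st])
  thus ?case by simp
qed

lemma iter_bound:
  fixes S0 :: "(real^'d::finite) set" and a b :: "real^'d" and \<epsilon> D0 :: real
  assumes fin0: "finite S0" and ab: "a \<in> S0" "b \<in> S0"
    and medS: "\<And>S. finite S \<Longrightarrow> S \<noteq> {} \<Longrightarrow> is_median S (med S)"
    and D0: "0 < D0" "\<And>c c'. c \<in> S0 \<Longrightarrow> c' \<in> S0 \<Longrightarrow> norm (c - c') \<le> D0"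
    and far: "D0 / 2 \<le> norm (a - b)"
    and e: "0 \<le> \<epsilon>" "\<epsilon> \<le> 1/320"
  shows "emeasure (PiM {..<n} (\<lambda>_. choice_measure :: 'd choice measure))
           {w \<in> space (PiM {..<n} (\<lambda>_. choice_measure :: 'd choice measure)). a \<in> xrun med \<epsilon> x S0 w n \<and> b \<in> xrun med \<epsilon> x S0 w n}
         \<le> ennreal ((1 - 1 / (64 * CARD('d))) ^ n)"
proof (induction n)
  case 0
  interpret P0: prob_space "PiM {..<0} (\<lambda>_. choice_measure :: 'd choice measure)"
    by (intro prob_space_PiM prob_choice)
  show ?case by (simp only: power_0 ennreal_1) (rule P0.emeasure_le_1)
next
  case (Suc n)
  let ?M = "choice_measure :: 'd choice measure"
  let ?q = "1 - 1 / real (64 * CARD('d))"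
  have q0: "0 \<le> ?q"
  proof -
    have c0: "0 < CARD('d)" by (rule zero_less_card_finite)
    hence "1 \<le> real CARD('d)" by linarith
    hence "1 \<le> 64 * real CARD('d)" by linarith
    hence "1 / real (64 * CARD('d)) \<le> 1" by (simp add: divide_le_eq)
    thus ?thesis by simp
  qed
  define E where "E m = {w \<in> space (PiM {..<m} (\<lambda>_. ?M)). a \<in> xrun med \<epsilon> x S0 w m \<and> b \<in> xrun med \<epsilon> x S0 w m}" for m
  have Em: "E m \<in> sets (PiM {..<m} (\<lambda>_. ?M))" for m
  proof -
    have "E m = (\<lambda>w. xrun med \<epsilon> x S0 w m) -` {T \<in> Pow S0. a \<in> T \<and> b \<in> T} \<inter> space (PiM {..<m} (\<lambda>_. ?M))"
      unfolding E_def using xrun_sub[of med \<epsilon> x S0] by blast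
    also have "\<dots> \<in> sets (PiM {..<m} (\<lambda>_. ?M))"
      by (rule measurable_sets[OF xrun_meas[OF fin0 order.refl order.refl]]) auto
    finally show ?thesis .
  qed
  interpret PS: product_sigma_finite "\<lambda>_. ?M"
    unfolding product_sigma_finite_def using prob_space_imp_sigma_finite[OF prob_choice] by simp
  interpret PM: prob_space ?M by (rule prob_choice)
  have ins: "{..<Suc n} = insert n {..<n}" by auto
  have "emeasure (PiM {..<Suc n} (\<lambda>_. ?M)) (E (Suc n)) = (\<integral>\<^sup>+ w. indicator (E (Suc n)) w \<partial>PiM {..<Suc n} (\<lambda>_. ?M))"
    using Em by simp
  also have "\<dots> = (\<integral>\<^sup>+ w. (\<integral>\<^sup>+ y. indicator (E (Suc n)) (w(n := y)) \<partial>?M) \<partial>PiM {..<n} (\<lambda>_. ?M))"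
    unfolding ins
    by (rule PS.product_nn_integral_insert) (use Em[of "Suc n"] ins in auto)
  also have "\<dots> \<le> (\<integral>\<^sup>+ w. ennreal ?q * indicator (E n) w \<partial>PiM {..<n} (\<lambda>_. ?M))"
  proof (rule nn_integral_mono)
    fix w assume w: "w \<in> space (PiM {..<n} (\<lambda>_. ?M))"
    define T where "T = xrun med \<epsilon> x S0 w n"
    have run_upd: "xrun med \<epsilon> x S0 (w(n := y)) n = T" for y
      unfolding T_def by (rule xrun_cong) auto
    have run_upd': "xrun med \<epsilon> x S0 (w(n := y)) (Suc n) = xstep med \<epsilon> x T y" for y
      using run_upd by simp
    show "(\<integral>\<^sup>+ y. indicator (E (Suc n)) (w(n := y)) \<partial>?M) \<le> ennreal ?q * indicator (E n) w"
    proof (cases "a \<in> T \<and> b \<in> T")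
      case False
      have "indicator (E (Suc n)) (w(n := y)) = (0::ennreal)" for y
      proof -
        have "a \<in> xstep med \<epsilon> x T y \<and> b \<in> xstep med \<epsilon> x T y \<Longrightarrow> False"
          using False xstep_sub[of med \<epsilon> x T y] by auto
        thus ?thesis unfolding E_def using run_upd' by (auto simp: indicator_def)
      qed
      thus ?thesis by simp
    next
      case True
      have Tsub: "T \<subseteq> S0" unfolding T_def by (rule xrun_sub)
      have finT: "finite T" using fin0 Tsub finite_subset by blast
      have medT: "is_median T (med T)" using medS[OF finT] True by auto
      define Y where "Y = {ch \<in> space ?M. a \<in> xstep med \<epsilon> x T ch \<and> b \<in> xstep med \<epsilon> x T ch}"
      have Ym: "Y \<in> sets ?M" and Yb: "measure ?M Y \<le> ?q"
        using step_bound[where S=T and a=a and b=b and x=x and med=med, OF fin0 Tsub _ _ medT D0 far e] True unfolding Y_def by auto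
      have "(\<integral>\<^sup>+ y. indicator (E (Suc n)) (w(n := y)) \<partial>?M) \<le> (\<integral>\<^sup>+ y. indicator Y y \<partial>?M)"
      proof (rule nn_integral_mono)
        fix y assume y: "y \<in> space ?M"
        show "indicator (E (Suc n)) (w(n := y)) \<le> (indicator Y y :: ennreal)"
          unfolding E_def Y_def indicator_def using run_upd' y by auto
      qed
      also have "\<dots> = emeasure ?M Y" using Ym by simp
      also have "\<dots> = ennreal (measure ?M Y)" by (rule PM.emeasure_eq_measure)
      also have "\<dots> \<le> ennreal ?q" using Yb by (rule ennreal_leI)
      also have "\<dots> = ennreal ?q * indicator (E n) w"
        using True w unfolding E_def T_def by simp
      finally show ?thesis .
    qed
  qed
  also have "\<dots> = ennreal ?q * emeasure (PiM {..<n} (\<lambda>_. ?M)) (E n)"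
    using Em by (rule nn_integral_cmult_indicator)
  also have "\<dots> \<le> ennreal ?q * ennreal (?q ^ n)"
    using Suc.IH unfolding E_def by (intro mult_left_mono) auto
  also have "\<dots> = ennreal (?q ^ Suc n)"
    using q0 by (simp add: ennreal_mult[symmetric])
  finally show ?case unfolding E_def .
qed

lemma diam_pair:
  fixes T :: "(real^'d) set"
  assumes "finite T" "0 < r" "r \<le> diameter T"
  shows "\<exists>a\<in>T. \<exists>b\<in>T. r \<le> norm (a - b)"
proof -
  have "T \<noteq> {}" using assms by auto
  then obtain a b where "a \<in> T" "b \<in> T" "dist a b = diameter T"
    using diameter_compact_attained[OF finite_imp_compact[OF assms(1)]] by blast
  thus ?thesis using assms(3) by (metis dist_norm)
qed

lemma final_arith:
  fixes k d :: real and L :: nat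
  assumes k: "2 \<le> k" and d: "1 \<le> d" and L: "640 * d * ln k \<le> real L"
  shows "k^2 * (1 - 1/(64*d))^L \<le> 1 / k^3"
proof -
  have q0: "0 \<le> 1 - 1/(64*d)" using d by (simp add: divide_le_eq)
  have "1 - 1/(64*d) \<le> exp (- (1/(64*d)))" using exp_ge_add_one_self[of "- (1/(64*d))"] by simp
  hence "(1 - 1/(64*d))^L \<le> exp (- (1/(64*d)))^L" using q0 by (intro power_mono) auto
  also have "\<dots> = exp (real L * (- (1/(64*d))))" by (rule exp_of_nat_mult[symmetric])
  also have "\<dots> \<le> exp (- 10 * ln k)"
  proof -
    have "640 * (ln k * d) \<le> real L" using L by (simp add: ac_simps)
    hence "10 * ln k \<le> real L / (64 * d)" using d by (simp add: le_divide_eq)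
    thus ?thesis by simp
  qed
  also have "\<dots> = 1 / k^10"
  proof -
    have "exp (- 10 * ln k) = exp (real (10::nat) * (- ln k))" by simp
    also have "\<dots> = exp (- ln k)^10" by (rule exp_of_nat_mult)
    also have "\<dots> = (1/k)^10" using k by (simp add: exp_minus exp_ln inverse_eq_divide)
    finally show ?thesis by (simp add: power_one_over)
  qed
  finally have "(1 - 1/(64*d))^L \<le> 1 / k^10" .
  hence "k^2 * (1 - 1/(64*d))^L \<le> k^2 * (1 / k^10)" using k by (intro mult_left_mono) auto
  also have "\<dots> = 1 / k^8" using k by (simp add: field_simps power_add[symmetric])
  also have "\<dots> \<le> 1 / k^3"
  proof -
    have "k^3 \<le> k^8" using k by (intro power_increasing) auto
    thus ?thesis using k by (intro divide_left_mono) auto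
  qed
  finally show ?thesis .
qed

lemma q_nonneg: "0 \<le> 1 - 1 / real (64 * CARD('d::finite))"
proof -
  have c0: "0 < CARD('d)" by (rule zero_less_card_finite)
  hence "1 \<le> real CARD('d)" by linarith
  hence "1 \<le> 64 * real CARD('d)" by linarith
  hence "1 / real (64 * CARD('d)) \<le> 1" by (simp add: divide_le_eq)
  thus ?thesis by simp
qed

theorem lemma4:
  fixes C :: "(real^'d::finite) set" and \<delta> :: real and x :: "real^'d"
    and med :: "(real^'d) set \<Rightarrow> real^'d"
    and n :: nat and h :: "nat \<Rightarrow> 'd choice"
  assumes "finite C"
    and "0 < \<delta>" and "\<delta> < 1"
    and "\<And>S. finite S \<Longrightarrow> S \<noteq> {} \<Longrightarrow> is_median S (med S)"
    and "\<And>s. s < n \<Longrightarrow> valid_choice (h s)"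
    and "Dleaf x (run med (eps_param \<delta> (card C)) (root_tree C) h n) > 0"
  shows "let \<epsilon> = eps_param \<delta> (card C);
             L = nat \<lceil>640 * real CARD('d) * ln (real (card C))\<rceil>;
             Tt = run med \<epsilon> (root_tree C) h n;
             P = PiM {..<L} (\<lambda>_. choice_measure);
             A = {\<omega> \<in> space P. Dleaf x (run med \<epsilon> Tt \<omega> L) \<ge> Dleaf x Tt / 2}
         in A \<in> sets P \<and> measure P A \<le> 1 / real (card C) ^ 3"
proof -
  note finC = assms(1) and \<delta>0 = assms(2) and medS = assms(4) and pos = assms(6)
  define \<epsilon> where "\<epsilon> = eps_param \<delta> (card C)"
  define L where "L = nat \<lceil>640 * real CARD('d) * ln (real (card C))\<rceil>"
  define Tt where "Tt = run med \<epsilon> (root_tree C) h n"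
  define P where "P = PiM {..<L} (\<lambda>_. choice_measure :: 'd choice measure)"
  define A where "A = {w \<in> space P. Dleaf x (run med \<epsilon> Tt w L) \<ge> Dleaf x Tt / 2}"
  have invT: "tinv C Tt" unfolding Tt_def by (rule run_inv[OF tinv_root])
  define S0 where "S0 = leaf_centers x Tt"
  have S0C: "S0 \<subseteq> C"
  proof -
    obtain u where "u \<in> Tt" "leaf_centers x Tt = snd u" using tinv_leaf[OF invT, of x] by metis
    thus ?thesis using invT unfolding tinv_def S0_def by auto
  qed
  have fin0: "finite S0" using finC S0C finite_subset by blast
  define D0 where "D0 = diameter S0"
  have D0pos: "0 < D0" using pos unfolding D0_def S0_def Tt_def \<epsilon>_def Dleaf_def by simp
  have Dl: "Dleaf x (run med \<epsilon> Tt w L) = diameter (xrun med \<epsilon> x S0 w L)" for w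
    unfolding Dleaf_def S0_def by (simp add: leaf_run[OF invT])
  have DlT: "Dleaf x Tt = D0" unfolding Dleaf_def D0_def S0_def ..
  have Dbound: "norm (c - c') \<le> D0" if "c \<in> S0" "c' \<in> S0" for c c'
    using diameter_bounded_bound[OF finite_imp_bounded[OF fin0] that] unfolding D0_def by (simp add: dist_norm)
  obtain a0 b0 where ab0: "a0 \<in> S0" "b0 \<in> S0" "D0 \<le> norm (a0 - b0)"
    using diam_pair[OF fin0 D0pos] unfolding D0_def by auto
  have "a0 \<noteq> b0" using ab0 D0pos by auto
  hence c2: "card {a0, b0} = 2" by simp
  have "card {a0, b0} \<le> card S0" using ab0 fin0 by (intro card_mono) auto
  hence "2 \<le> card S0" using c2 by simp
  also have "card S0 \<le> card C" using finC S0C by (rule card_mono)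
  finally have k2: "2 \<le> card C" .
  have lnk: "0 < ln (real (card C))" using k2 by simp
  have e: "0 \<le> \<epsilon>" "\<epsilon> \<le> 1/320"
    unfolding \<epsilon>_def eps_param_def using lnk \<delta>0 by auto
  let ?q = "1 - 1 / real (64 * CARD('d))"
  interpret PP: prob_space P unfolding P_def by (intro prob_space_PiM prob_choice)
  have Aeq: "A = (\<lambda>w. xrun med \<epsilon> x S0 w L) -` {T \<in> Pow S0. D0 / 2 \<le> diameter T} \<inter> space P"
    unfolding A_def Dl DlT using xrun_sub[of med \<epsilon> x S0] by blast
  have Am: "A \<in> sets P" unfolding Aeq P_def
    by (rule measurable_sets[OF xrun_meas[OF fin0 order.refl order.refl]]) auto
  define Pairs where "Pairs = {ab \<in> S0 \<times> S0. D0 / 2 \<le> norm (fst ab - snd ab)}"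
  define E where "E ab = {w \<in> space P. fst ab \<in> xrun med \<epsilon> x S0 w L \<and> snd ab \<in> xrun med \<epsilon> x S0 w L}" for ab
  have finP: "finite Pairs" unfolding Pairs_def using fin0 by simp
  have Em: "E ab \<in> sets P" for ab
  proof -
    have "E ab = (\<lambda>w. xrun med \<epsilon> x S0 w L) -` {T \<in> Pow S0. fst ab \<in> T \<and> snd ab \<in> T} \<inter> space P"
      unfolding E_def using xrun_sub[of med \<epsilon> x S0] by blast
    also have "\<dots> \<in> sets P" unfolding P_def
      by (rule measurable_sets[OF xrun_meas[OF fin0 order.refl order.refl]]) auto
    finally show ?thesis .
  qed
  have AU: "A \<subseteq> (\<Union>ab\<in>Pairs. E ab)"
  proof
    fix w assume w: "w \<in> A"
    define T where "T = xrun med \<epsilon> x S0 w L"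
    have "T \<subseteq> S0" unfolding T_def by (rule xrun_sub)
    hence finT: "finite T" using fin0 finite_subset by blast
    have "D0 / 2 \<le> diameter T" using w unfolding A_def Dl DlT T_def by auto
    then obtain a b where "a \<in> T" "b \<in> T" "D0 / 2 \<le> norm (a - b)"
      using diam_pair[OF finT] D0pos by (metis half_gt_zero)
    thus "w \<in> (\<Union>ab\<in>Pairs. E ab)" using \<open>T \<subseteq> S0\<close> w
      unfolding Pairs_def E_def A_def T_def by (intro UN_I[of "(a, b)"]) auto
  qed
  have Eb: "measure P (E ab) \<le> ?q ^ L" if "ab \<in> Pairs" for ab
  proof -
    obtain a b where ab: "ab = (a, b)" by (cases ab)
    have "a \<in> S0" "b \<in> S0" "D0 / 2 \<le> norm (a - b)" using that ab unfolding Pairs_def by auto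
    from iter_bound[OF fin0 this(1,2) medS D0pos Dbound this(3) e, of L x]
    have "emeasure P (E ab) \<le> ennreal (?q ^ L)" unfolding E_def P_def ab by simp
    hence "ennreal (measure P (E ab)) \<le> ennreal (?q ^ L)" by (simp add: PP.emeasure_eq_measure)
    moreover have "0 \<le> ?q ^ L"
      by (intro zero_le_power q_nonneg)
    ultimately show ?thesis by (simp add: ennreal_le_iff)
  qed
  have "measure P A \<le> measure P (\<Union>ab\<in>Pairs. E ab)"
    using AU finP Em by (intro PP.finite_measure_mono) auto
  also have "\<dots> \<le> (\<Sum>ab\<in>Pairs. measure P (E ab))"
    using finP Em by (intro measure_UNION_le) auto
  also have "\<dots> \<le> (\<Sum>ab\<in>Pairs. ?q ^ L)" using Eb by (intro sum_mono) auto
  also have "\<dots> = real (card Pairs) * ?q ^ L" by simp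
  also have "\<dots> \<le> real (card C) ^ 2 * ?q ^ L"
  proof -
    have "card Pairs \<le> card (S0 \<times> S0)" using fin0 unfolding Pairs_def by (intro card_mono) auto
    also have "\<dots> = card S0 ^ 2" by (simp add: card_cartesian_product power2_eq_square)
    also have "\<dots> \<le> card C ^ 2" using card_mono[OF finC S0C] by (intro power_mono) auto
    finally have "real (card Pairs) \<le> real (card C) ^ 2" by (metis of_nat_le_iff of_nat_power)
    moreover have "0 \<le> ?q ^ L"
      by (intro zero_le_power q_nonneg)
    ultimately show ?thesis by (intro mult_right_mono) auto
  qed
  also have "\<dots> \<le> 1 / real (card C) ^ 3"
  proof -
    have d1: "1 \<le> real CARD('d)" using zero_less_card_finite[where 'a='d] by linarith
    have "640 * real CARD('d) * ln (real (card C)) \<le> real L"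
      unfolding L_def using lnk by linarith
    from final_arith[OF _ d1 this] k2 show ?thesis by simp
  qed
  finally have "A \<in> sets P \<and> measure P A \<le> 1 / real (card C) ^ 3" using Am by simp
  thus ?thesis unfolding Let_def \<epsilon>_def[symmetric] L_def[symmetric] Tt_def[symmetric] P_def[symmetric] A_def[symmetric] .
qed


end
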